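(* Let $(X,G)$ be a minimal topological dynamical system, $K\ge 2$, and $(x_1,\dots,x_K)\in RP_K(X,G)$. Then for any $\epsilon>0$ and any nonempty open set $U\subset X$, there exist $h\in G$ and nonempty open sets $V_k\subset B^X_\epsilon(x_k)$, $k=1,\dots,K$, such that $hV_k\subset U$ for all $k=1,\dots,K$.
   Context: $G$ is an infinite countable discrete group; a tds $(X,G)$ is a compact metric space $(X,d)$ with a $G$-action by homeomorphisms; minimal means no proper nonempty closed invariant subset. $B^X_\epsilon(x)$ is the open $\epsilon$-ball. $RP_K(X,G)$ is the set of $(x_1,\dots,x_K)\in X^K$ such that for every $\epsilon>0$ there exist $x_k'\in X$ and $g\in G$ with $d(x_k,x_k')\le\epsilon$ for $1\le k\le K$ and $d(gx'_{k_1},gx'_{k_2})\le\epsilon$ for $1\le k_1\le k_2\le K$. *)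

theory Defs
  imports "HOL-Analysis.Analysis" "HOL-Algebra.Group"
begin

text \<open>A topological dynamical system (X,G): X a compact subset of a metric space (so a compact
metric space with the induced metric), G an infinite countable discrete group (HOL-Algebra
group with countable infinite carrier), acting on X by homeomorphisms via act.\<close>

definition tds :: "('g, 'b) monoid_scheme \<Rightarrow> ('g \<Rightarrow> 'x::metric_space \<Rightarrow> 'x) \<Rightarrow> 'x set \<Rightarrow> bool" where
  "tds G act X \<longleftrightarrow>
     group G \<and> countable (carrier G) \<and> infinite (carrier G) \<and>
     compact X \<and> X \<noteq> {} \<and>
     (\<forall>g\<in>carrier G. homeomorphism X X (act g) (act (inv\<^bsub>G\<^esub> g))) \<and>
     (\<forall>x\<in>X. act \<one>\<^bsub>G\<^esub> x = x) \<and>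
     (\<forall>g\<in>carrier G. \<forall>h\<in>carrier G. \<forall>x\<in>X. act (g \<otimes>\<^bsub>G\<^esub> h) x = act g (act h x))"

definition minimal_tds :: "('g, 'b) monoid_scheme \<Rightarrow> ('g \<Rightarrow> 'x::metric_space \<Rightarrow> 'x) \<Rightarrow> 'x set \<Rightarrow> bool" where
  "minimal_tds G act X \<longleftrightarrow> tds G act X \<and>
     (\<forall>Y. Y \<subseteq> X \<and> closed Y \<and> Y \<noteq> {} \<and> (\<forall>g\<in>carrier G. act g ` Y \<subseteq> Y) \<longrightarrow> Y = X)"

text \<open>RP_K(X,G): K-tuples are represented as functions on indices {1..K}.\<close>
definition RP :: "nat \<Rightarrow> ('g, 'b) monoid_scheme \<Rightarrow> ('g \<Rightarrow> 'x::metric_space \<Rightarrow> 'x) \<Rightarrow> 'x set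
                  \<Rightarrow> (nat \<Rightarrow> 'x) set" where
  "RP K G act X = {x. (\<forall>k\<in>{1..K}. x k \<in> X) \<and>
     (\<forall>\<epsilon>>0. \<exists>x'. \<exists>g\<in>carrier G. (\<forall>k\<in>{1..K}. x' k \<in> X \<and> dist (x k) (x' k) \<le> \<epsilon>) \<and>
        (\<forall>k1\<in>{1..K}. \<forall>k2\<in>{1..K}. k1 \<le> k2 \<longrightarrow> dist (act g (x' k1)) (act g (x' k2)) \<le> \<epsilon>))}"

definition ballX :: "'x::metric_space set \<Rightarrow> 'x \<Rightarrow> real \<Rightarrow> 'x set" where
  "ballX X x \<epsilon> = {y\<in>X. dist x y < \<epsilon>}"

end

theory Submission
  imports Defs
begin

theorem lemma2p4:
  fixes G :: "('g, 'b) monoid_scheme" and act :: "'g \<Rightarrow> 'x::metric_space \<Rightarrow> 'x"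
    and X :: "'x set" and K :: nat and x :: "nat \<Rightarrow> 'x"
  assumes "minimal_tds G act X"
    and "K \<ge> 2"
    and "x \<in> RP K G act X"
    and "\<epsilon> > 0"
    and "openin (top_of_set X) U" and "U \<noteq> {}"
  shows "\<exists>h\<in>carrier G. \<exists>V. \<forall>k\<in>{1..K}.
           openin (top_of_set X) (V k) \<and> V k \<noteq> {} \<and> V k \<subseteq> ballX X (x k) \<epsilon> \<and>
           act h ` V k \<subseteq> U"
proof -
  have tds: "tds G act X" and mini: "\<And>Y. Y \<subseteq> X \<Longrightarrow> closed Y \<Longrightarrow> Y \<noteq> {} \<Longrightarrow>
      (\<forall>g\<in>carrier G. act g ` Y \<subseteq> Y) \<Longrightarrow> Y = X"
    using assms(1) unfolding minimal_tds_def by blast+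
  have grp: "group G" and cX: "compact X"
    and hom: "\<And>g. g \<in> carrier G \<Longrightarrow> homeomorphism X X (act g) (act (inv\<^bsub>G\<^esub> g))"
    and one: "\<And>y. y \<in> X \<Longrightarrow> act \<one>\<^bsub>G\<^esub> y = y"
    and mult: "\<And>g h y. g \<in> carrier G \<Longrightarrow> h \<in> carrier G \<Longrightarrow> y \<in> X \<Longrightarrow>
         act (g \<otimes>\<^bsub>G\<^esub> h) y = act g (act h y)"
    using tds unfolding tds_def by blast+
  have cont: "\<And>g. g \<in> carrier G \<Longrightarrow> continuous_on X (act g)"
    and maps: "\<And>g y. g \<in> carrier G \<Longrightarrow> y \<in> X \<Longrightarrow> act g y \<in> X"
    using hom unfolding homeomorphism_def by blast+
  obtain OU where OU: "open OU" "U = X \<inter> OU" using assms(5) by (auto simp: openin_open)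
  define W where "W g = X \<inter> act g -` OU" for g
  have Wopen: "openin (top_of_set X) (W g)" if "g \<in> carrier G" for g
    unfolding W_def using continuous_openin_preimage_gen[OF cont[OF that] OU(1)] .
  have Wmem: "y \<in> W g \<longleftrightarrow> y \<in> X \<and> act g y \<in> U" if "g \<in> carrier G" for g y
    using maps[OF that] OU(2) unfolding W_def by auto
  have cover: "X \<subseteq> (\<Union>g\<in>carrier G. W g)"
  proof (rule ccontr)
    assume nc: "\<not> ?thesis"
    define Y where "Y = X - (\<Union>g\<in>carrier G. W g)"
    have "openin (top_of_set X) (\<Union>g\<in>carrier G. W g)" using Wopen by blast
    hence "closedin (top_of_set X) Y" unfolding Y_def using closedin_diff closedin_topspace by (metis closedin_def topspace_euclidean_subtopology)
    hence cY: "closed Y" using cX compact_imp_closed closedin_closed_trans by blast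
    have inv: "\<forall>h\<in>carrier G. act h ` Y \<subseteq> Y"
    proof (intro ballI subsetI)
      fix h z assume h: "h \<in> carrier G" and "z \<in> act h ` Y"
      then obtain y where y: "y \<in> Y" "z = act h y" by blast
      have yX: "y \<in> X" using y Y_def by blast
      show "z \<in> Y"
      proof (rule ccontr)
        assume "z \<notin> Y"
        then obtain g where g: "g \<in> carrier G" "z \<in> W g" using maps[OF h yX] y Y_def by blast
        have gh: "g \<otimes>\<^bsub>G\<^esub> h \<in> carrier G" using grp g h by (simp add: group.is_monoid monoid.m_closed)
        have "y \<in> W (g \<otimes>\<^bsub>G\<^esub> h)" using Wmem[OF gh] Wmem[OF g(1)] g y yX mult[OF g(1) h yX] by auto
        thus False using y gh Y_def by blast
      qed
    qed
    have "Y \<noteq> {}" using nc Y_def by blast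
    hence "Y = X" using mini[OF _ cY _ inv] Y_def by blast
    moreover obtain u where u: "u \<in> U" using assms(6) by blast
    have o1: "\<one>\<^bsub>G\<^esub> \<in> carrier G" using grp by (simp add: group.is_monoid monoid.one_closed)
    have "u \<in> X" using u OU by blast
    hence "u \<in> W \<one>\<^bsub>G\<^esub>" using Wmem[OF o1] one u by auto
    ultimately show False using Y_def o1 \<open>u \<in> X\<close> by blast
  qed
  have "\<forall>g\<in>carrier G. \<exists>T. open T \<and> W g = X \<inter> T" using Wopen by (auto simp: openin_open)
  then obtain T where T: "\<And>g. g \<in> carrier G \<Longrightarrow> open (T g) \<and> W g = X \<inter> T g" by metis
  have "X \<subseteq> \<Union>(T ` carrier G)" using cover T by blast
  then obtain e where e: "e > 0" "\<And>y. y \<in> X \<Longrightarrow> \<exists>S\<in>T ` carrier G. ball y e \<subseteq> S"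
    using Heine_Borel_lemma[OF cX] T by blast
  define e' where "e' = min (\<epsilon>/2) (e/2)"
  have e': "e' > 0" using e assms(4) by (simp add: e'_def)
  obtain x' g where g: "g \<in> carrier G" and x': "\<forall>k\<in>{1..K}. x' k \<in> X \<and> dist (x k) (x' k) \<le> e'"
    and cl: "\<forall>k1\<in>{1..K}. \<forall>k2\<in>{1..K}. k1 \<le> k2 \<longrightarrow> dist (act g (x' k1)) (act g (x' k2)) \<le> e'"
    using assms(3) e' unfolding RP_def by blast
  have xX: "\<forall>k\<in>{1..K}. x k \<in> X" using assms(3) unfolding RP_def by blast
  have 1: "1 \<in> {1..K}" using assms(2) by simp
  have yX: "act g (x' 1) \<in> X" using maps[OF g] x' 1 by blast
  obtain g0 where g0: "g0 \<in> carrier G" "ball (act g (x' 1)) e \<subseteq> T g0" using e(2)[OF yX] by blast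
  have inU: "act g0 (act g (x' k)) \<in> U" if k: "k \<in> {1..K}" for k
  proof -
    have kX: "act g (x' k) \<in> X" using maps[OF g] x' k by blast
    have "dist (act g (x' 1)) (act g (x' k)) \<le> e'" using cl 1 k by auto
    hence "act g (x' k) \<in> ball (act g (x' 1)) e" using e e'_def by (simp add: dist_commute)
    hence "act g (x' k) \<in> W g0" using T[OF g0(1)] g0(2) kX by blast
    thus ?thesis using Wmem[OF g0(1)] by blast
  qed
  define h where "h = g0 \<otimes>\<^bsub>G\<^esub> g"
  have h: "h \<in> carrier G" using grp g g0 h_def by (simp add: group.is_monoid monoid.m_closed)
  define V where "V k = ballX X (x k) \<epsilon> \<inter> W h" for k
  have "\<forall>k\<in>{1..K}. openin (top_of_set X) (V k) \<and> V k \<noteq> {} \<and> V k \<subseteq> ballX X (x k) \<epsilon> \<and>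
           act h ` V k \<subseteq> U"
  proof
    fix k assume k: "k \<in> {1..K}"
    have "ballX X (x k) \<epsilon> = X \<inter> ball (x k) \<epsilon>" unfolding ballX_def by auto
    hence "openin (top_of_set X) (ballX X (x k) \<epsilon>)" by (auto simp: openin_open_Int)
    hence o: "openin (top_of_set X) (V k)" unfolding V_def using Wopen[OF h] by blast
    have "x' k \<in> V k"
    proof -
      have "x' k \<in> X" "dist (x k) (x' k) < \<epsilon>" using x' k e' e'_def assms(4) by force+
      moreover have "act h (x' k) \<in> U" using inU[OF k] mult[OF g0(1) g] \<open>x' k \<in> X\<close> h_def by simp
      ultimately show ?thesis unfolding V_def ballX_def using Wmem[OF h] by blast
    qed
    moreover have "act h ` V k \<subseteq> U" unfolding V_def using Wmem[OF h] by blast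
    ultimately show "openin (top_of_set X) (V k) \<and> V k \<noteq> {} \<and> V k \<subseteq> ballX X (x k) \<epsilon> \<and>
           act h ` V k \<subseteq> U" using o V_def by blast
  qed
  thus ?thesis using h by blast
qed

end
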